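(* In System $\mathsf{F_{<:}^{K\top}}$, if $\Theta \vdash_A R <: S$ and $\Theta \vdash_A S <: T$, then $\Theta \vdash_A R <: T$.
   Context: System $\mathsf{F_{<:}^{K\top}}$: raw types $T ::= \top \mid X \mid T\to T \mid \forall^{\mathsf K}(X<:T).T \mid \forall^\top(X<:T).T$, up to $\alpha$-conversion. Contexts $\Theta$: finite sequences of $X<:T$ or $x:T$ with distinct variables, each type well-formed (free type variables declared earlier) over the preceding part; $\Theta\vdash T$ means $T$ is well-formed over well-formed $\Theta$. Algorithmic subtyping $\Theta\vdash_A S<:T$ (for $\Theta\vdash S$, $\Theta\vdash T$) is generated by: (1) $\Theta\vdash_A T<:\top$; (2) $\Theta\vdash_A X<:X$; (3) if $T\not\equiv\top$, $T\not\equiv X$ and $\Theta,X<:S,\Theta'\vdash_A S<:T$, then $\Theta,X<:S,\Theta'\vdash_A X<:T$; (4) from $\Theta\vdash_A S'<:S$ and $\Theta\vdash_A T<:T'$ infer $\Theta\vdash_A S\to T<:S'\to T'$; (5) from $\Theta,X<:S\vdash_A T<:T'$ infer $\Theta\vdash_A\forall^{\mathsf K}(X<:S).T<:\forall^{\mathsf K}(X<:S).T'$; (6) from $\Theta\vdash_A T_0<:S_0$ and $\Theta,X<:S_0\vdash_A S_1<:T_1$ infer $\Theta\vdash_A\forall^{\mathsf K}(X<:S_0).S_1<:\forall^\top(X<:T_0).T_1$; (7) from $\Theta\vdash_A T_0<:S_0$ and $\Theta,X<:\top\vdash_A S_1<:T_1$ infer $\Theta\vdash_A\forall^\top(X<:S_0).S_1<:\forall^\top(X<:T_0).T_1$.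 *)

theory Defs
  imports Main
begin

text \<open>Index 0 refers to the most recent binding of the
  context; term-variable bindings also occupy an index.\<close>

datatype type =
    Top
  | TVar nat
  | Fun type type
  | AllK type type   \<comment> \<open>\<forall>^K (X<:S).T, the body binds index 0\<close>
  | AllT type type   \<comment> \<open>\<forall>^Top (X<:S).T, the body binds index 0\<close>

datatype binding = VarB type | TVarB type

type_synonym env = "binding list"

fun shiftT :: "nat \<Rightarrow> nat \<Rightarrow> type \<Rightarrow> type" where
  "shiftT n k Top = Top"
| "shiftT n k (TVar i) = (if i < k then TVar i else TVar (i + n))"
| "shiftT n k (Fun A B) = Fun (shiftT n k A) (shiftT n k B)"
| "shiftT n k (AllK A B) = AllK (shiftT n k A) (shiftT n (Suc k) B)"
| "shiftT n k (AllT A B) = AllT (shiftT n k A) (shiftT n (Suc k) B)"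

fun shiftB :: "nat \<Rightarrow> nat \<Rightarrow> binding \<Rightarrow> binding" where
  "shiftB n k (VarB T) = VarB (shiftT n k T)"
| "shiftB n k (TVarB T) = TVarB (shiftT n k T)"

text \<open>Lookup of the i-th binding, with its type shifted into the full context.\<close>
fun lookup :: "env \<Rightarrow> nat \<Rightarrow> binding option" where
  "lookup [] i = None"
| "lookup (B # \<Gamma>) 0 = Some (shiftB 1 0 B)"
| "lookup (B # \<Gamma>) (Suc i) = map_option (shiftB 1 0) (lookup \<Gamma> i)"

inductive wf_type :: "env \<Rightarrow> type \<Rightarrow> bool" where
  wf_Top: "wf_type \<Gamma> Top"
| wf_TVar: "lookup \<Gamma> i = Some (TVarB U) \<Longrightarrow> wf_type \<Gamma> (TVar i)"
| wf_Fun: "wf_type \<Gamma> A \<Longrightarrow> wf_type \<Gamma> B \<Longrightarrow> wf_type \<Gamma> (Fun A B)"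
| wf_AllK: "wf_type \<Gamma> A \<Longrightarrow> wf_type (TVarB A # \<Gamma>) B \<Longrightarrow> wf_type \<Gamma> (AllK A B)"
| wf_AllT: "wf_type \<Gamma> A \<Longrightarrow> wf_type (TVarB A # \<Gamma>) B \<Longrightarrow> wf_type \<Gamma> (AllT A B)"

inductive wf_env :: "env \<Rightarrow> bool" where
  wf_Nil: "wf_env []"
| wf_VarB: "wf_env \<Gamma> \<Longrightarrow> wf_type \<Gamma> T \<Longrightarrow> wf_env (VarB T # \<Gamma>)"
| wf_TVarB: "wf_env \<Gamma> \<Longrightarrow> wf_type \<Gamma> T \<Longrightarrow> wf_env (TVarB T # \<Gamma>)"

text \<open>Algorithmic subtyping; the well-formedness presuppositions are built into
  the axioms, so every derivable judgment is well-formed.\<close>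
inductive subA :: "env \<Rightarrow> type \<Rightarrow> type \<Rightarrow> bool" ("_ \<turnstile>\<^sub>A _ <: _" [50, 50, 50] 50) where
  SA_Top: "wf_env \<Gamma> \<Longrightarrow> wf_type \<Gamma> S \<Longrightarrow> \<Gamma> \<turnstile>\<^sub>A S <: Top"
| SA_Refl_TVar: "wf_env \<Gamma> \<Longrightarrow> wf_type \<Gamma> (TVar i) \<Longrightarrow> \<Gamma> \<turnstile>\<^sub>A TVar i <: TVar i"
| SA_Trans_TVar: "lookup \<Gamma> i = Some (TVarB U) \<Longrightarrow> T \<noteq> Top \<Longrightarrow> T \<noteq> TVar i \<Longrightarrow>
    \<Gamma> \<turnstile>\<^sub>A U <: T \<Longrightarrow> \<Gamma> \<turnstile>\<^sub>A TVar i <: T"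
| SA_Fun: "\<Gamma> \<turnstile>\<^sub>A S' <: S \<Longrightarrow> \<Gamma> \<turnstile>\<^sub>A T <: T' \<Longrightarrow> \<Gamma> \<turnstile>\<^sub>A Fun S T <: Fun S' T'"
| SA_AllK: "TVarB S # \<Gamma> \<turnstile>\<^sub>A T <: T' \<Longrightarrow> \<Gamma> \<turnstile>\<^sub>A AllK S T <: AllK S T'"
| SA_AllKT: "\<Gamma> \<turnstile>\<^sub>A T0 <: S0 \<Longrightarrow> TVarB S0 # \<Gamma> \<turnstile>\<^sub>A S1 <: T1 \<Longrightarrow>
    \<Gamma> \<turnstile>\<^sub>A AllK S0 S1 <: AllT T0 T1"
| SA_AllT: "\<Gamma> \<turnstile>\<^sub>A T0 <: S0 \<Longrightarrow> TVarB Top # \<Gamma> \<turnstile>\<^sub>A S1 <: T1 \<Longrightarrow>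
    \<Gamma> \<turnstile>\<^sub>A AllT S0 S1 <: AllT T0 T1"

end

theory Submission
  imports Defs
begin

lemma lookup_mid_TVarB: "\<exists>U. lookup (\<Delta> @ TVarB A # \<Gamma>) (length \<Delta>) = Some (TVarB U)"
proof (induction \<Delta>)
  case Nil then show ?case by simp
next
  case (Cons b \<Delta>)
  then obtain U where "lookup (\<Delta> @ TVarB A # \<Gamma>) (length \<Delta>) = Some (TVarB U)" by blast
  then show ?case by simp
qed

lemma lookup_mid_Top: "lookup (\<Delta> @ TVarB Top # \<Gamma>) (length \<Delta>) = Some (TVarB Top)"
  by (induction \<Delta>) auto

lemma lookup_other: "i \<noteq> length \<Delta> \<Longrightarrow> lookup (\<Delta> @ B # \<Gamma>) i = lookup (\<Delta> @ B' # \<Gamma>) i"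
proof (induction \<Delta> arbitrary: i)
  case Nil then show ?case by (cases i) auto
next
  case (Cons b \<Delta>) then show ?case by (cases i) auto
qed

lemma wf_type_narrow:
  "wf_type \<Gamma>' T \<Longrightarrow> \<Gamma>' = \<Delta> @ TVarB A # \<Gamma> \<Longrightarrow> wf_type (\<Delta> @ TVarB B # \<Gamma>) T"
proof (induction arbitrary: \<Delta> rule: wf_type.induct)
  case wf_Top show ?case by (rule wf_type.wf_Top)
next
  case (wf_TVar \<Gamma>' i U)
  show ?case
  proof (cases "i = length \<Delta>")
    case True
    then obtain U' where "lookup (\<Delta> @ TVarB B # \<Gamma>) i = Some (TVarB U')"
      using lookup_mid_TVarB by blast
    then show ?thesis by (rule wf_type.wf_TVar)
  next
    case False
    then have "lookup (\<Delta> @ TVarB B # \<Gamma>) i = Some (TVarB U)"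
      using wf_TVar lookup_other by metis
    then show ?thesis by (rule wf_type.wf_TVar)
  qed
next
  case (wf_Fun G A' B') then show ?case by (simp add: wf_type.wf_Fun)
next
  case (wf_AllK \<Gamma>' A' B')
  then show ?case using wf_type.wf_AllK[of "\<Delta> @ TVarB B # \<Gamma>" A' B'] by fastforce
next
  case (wf_AllT \<Gamma>' A' B')
  then show ?case using wf_type.wf_AllT[of "\<Delta> @ TVarB B # \<Gamma>" A' B'] by fastforce
qed

lemma wf_env_narrow:
  "wf_env (\<Delta> @ TVarB A # \<Gamma>) \<Longrightarrow> wf_type \<Gamma> B \<Longrightarrow> wf_env (\<Delta> @ TVarB B # \<Gamma>)"
proof (induction \<Delta>)
  case Nil
  then show ?case by (auto elim: wf_env.cases intro: wf_env.intros)
next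
  case (Cons b \<Delta>)
  from Cons.prems(1) show ?case
  proof (cases rule: wf_env.cases)
    case (wf_VarB T)
    then show ?thesis using Cons wf_type_narrow by (auto intro: wf_env.intros)
  next
    case (wf_TVarB T)
    then show ?thesis using Cons wf_type_narrow by (auto intro: wf_env.intros)
  qed auto
qed

lemma subA_wf: "\<Gamma> \<turnstile>\<^sub>A R <: S \<Longrightarrow> wf_env \<Gamma> \<and> wf_type \<Gamma> R \<and> wf_type \<Gamma> S"
proof (induction rule: subA.induct)
  case (SA_Top \<Gamma> S) then show ?case by (auto intro: wf_type.intros)
next
  case (SA_Refl_TVar \<Gamma> i) then show ?case by auto
next
  case (SA_Trans_TVar \<Gamma> i U T) then show ?case by (auto intro: wf_type.intros)
next
  case (SA_Fun \<Gamma> S' S T T') then show ?case by (auto intro: wf_type.intros)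
next
  case (SA_AllK S \<Gamma> T T')
  then have "wf_env \<Gamma>" "wf_type \<Gamma> S" by (auto elim: wf_env.cases)
  then show ?case using SA_AllK by (auto intro: wf_type.intros)
next
  case (SA_AllKT \<Gamma> T0 S0 S1 T1)
  have "wf_type ([] @ TVarB T0 # \<Gamma>) T1"
    using SA_AllKT wf_type_narrow[of "TVarB S0 # \<Gamma>" T1 "[]"] by auto
  then show ?case using SA_AllKT by (auto intro: wf_type.intros)
next
  case (SA_AllT \<Gamma> T0 S0 S1 T1)
  have "wf_type ([] @ TVarB T0 # \<Gamma>) T1"
    using SA_AllT wf_type_narrow[of "TVarB Top # \<Gamma>" T1 "[]"] by auto
  moreover have "wf_type ([] @ TVarB S0 # \<Gamma>) S1"
    using SA_AllT wf_type_narrow[of "TVarB Top # \<Gamma>" S1 "[]"] by auto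
  ultimately show ?case using SA_AllT by (auto intro: wf_type.intros)
qed

lemma Top_sub: "\<Gamma> \<turnstile>\<^sub>A Top <: T \<Longrightarrow> T = Top"
  by (cases rule: subA.cases) auto

lemma narrow_Top:
  "\<Gamma>' \<turnstile>\<^sub>A M <: N \<Longrightarrow> \<Gamma>' = \<Delta> @ TVarB Top # \<Gamma> \<Longrightarrow> wf_type \<Gamma> P \<Longrightarrow>
   \<Delta> @ TVarB P # \<Gamma> \<turnstile>\<^sub>A M <: N"
proof (induction arbitrary: \<Delta> rule: subA.induct)
  case (SA_Top \<Gamma>' S)
  then show ?case using wf_env_narrow wf_type_narrow by (auto intro: subA.SA_Top)
next
  case (SA_Refl_TVar \<Gamma>' i)
  then show ?case using wf_env_narrow wf_type_narrow by (auto intro: subA.SA_Refl_TVar)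
next
  case (SA_Trans_TVar \<Gamma>' i U T)
  show ?case
  proof (cases "i = length \<Delta>")
    case True
    then have "U = Top" using SA_Trans_TVar lookup_mid_Top by simp
    then have "T = Top" using SA_Trans_TVar Top_sub by blast
    then show ?thesis using SA_Trans_TVar by simp
  next
    case False
    then have "lookup (\<Delta> @ TVarB P # \<Gamma>) i = Some (TVarB U)"
      using SA_Trans_TVar lookup_other by metis
    then show ?thesis using SA_Trans_TVar by (auto intro: subA.SA_Trans_TVar)
  qed
next
  case (SA_Fun \<Gamma> S' S T T') then show ?case by (auto intro: subA.SA_Fun)
next
  case (SA_AllK S \<Gamma>' T T')
  then show ?case using subA.SA_AllK[of S "\<Delta> @ TVarB P # \<Gamma>"] by fastforce
next
  case (SA_AllKT \<Gamma>' T0 S0 S1 T1)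
  then show ?case using subA.SA_AllKT[of "\<Delta> @ TVarB P # \<Gamma>"] by fastforce
next
  case (SA_AllT \<Gamma>' T0 S0 S1 T1)
  then show ?case using subA.SA_AllT[of "\<Delta> @ TVarB P # \<Gamma>"] by fastforce
qed

lemma trans_aux: "\<And>\<Gamma> R T. \<Gamma> \<turnstile>\<^sub>A R <: Q \<Longrightarrow> \<Gamma> \<turnstile>\<^sub>A Q <: T \<Longrightarrow> \<Gamma> \<turnstile>\<^sub>A R <: T"
proof (induction Q)
  case Top
  have "T = Top" using Top.prems(2) by (rule Top_sub)
  then show ?case using Top.prems(1) by simp
next
  case (TVar j)
  from TVar.prems show ?case
  proof (induction \<Gamma> R "TVar j" rule: subA.induct)
    case (SA_Refl_TVar \<Gamma>) then show ?case by simp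
  next
    case (SA_Trans_TVar \<Gamma> i U)
    then have UT: "\<Gamma> \<turnstile>\<^sub>A U <: T" by simp
    have wf: "wf_env \<Gamma>" "wf_type \<Gamma> T" using subA_wf[OF UT] by auto
    have wfi: "wf_type \<Gamma> (TVar i)" using SA_Trans_TVar(1) by (rule wf_type.wf_TVar)
    show ?case
    proof (cases "T = Top")
      case True then show ?thesis using wf wfi by (simp add: subA.SA_Top)
    next
      case F1: False
      show ?thesis
      proof (cases "T = TVar i")
        case True then show ?thesis using wf wfi by (simp add: subA.SA_Refl_TVar)
      next
        case False then show ?thesis using F1 UT SA_Trans_TVar(1) subA.SA_Trans_TVar by blast
      qed
    qed
  qed
next
  case (Fun Q1 Q2)
  from Fun.prems show ?case
  proof (induction \<Gamma> R "Fun Q1 Q2" rule: subA.induct)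
    case (SA_Trans_TVar \<Gamma> i U)
    then have UT: "\<Gamma> \<turnstile>\<^sub>A U <: T" by simp
    have wf: "wf_env \<Gamma>" "wf_type \<Gamma> T" using subA_wf[OF UT] by auto
    have wfi: "wf_type \<Gamma> (TVar i)" using SA_Trans_TVar(1) by (rule wf_type.wf_TVar)
    show ?case
    proof (cases "T = Top")
      case True then show ?thesis using wf wfi by (simp add: subA.SA_Top)
    next
      case F1: False
      show ?thesis
      proof (cases "T = TVar i")
        case True then show ?thesis using wf wfi by (simp add: subA.SA_Refl_TVar)
      next
        case False then show ?thesis using F1 UT SA_Trans_TVar(1) subA.SA_Trans_TVar by blast
      qed
    qed
  next
    case (SA_Fun \<Gamma> R1 R2)
    note h1 = SA_Fun.hyps(1) and h3 = SA_Fun.hyps(3)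
    have wfR: "wf_env \<Gamma>" "wf_type \<Gamma> (Fun R1 R2)" using subA_wf[OF subA.SA_Fun[OF h1 h3]] by auto
    from SA_Fun.prems show ?case
    proof (cases rule: subA.cases)
      case SA_Top
      then show ?thesis using wfR by (simp add: subA.SA_Top)
    next
      case (SA_Fun T1 T2)
      note a = SA_Fun
      show ?thesis unfolding a(1)
        by (rule subA.SA_Fun[OF Fun.IH(1)[OF a(2) h1] Fun.IH(2)[OF h3 a(3)]])
    qed
  qed
next
  case (AllK Q1 Q2)
  from AllK.prems show ?case
  proof (induction \<Gamma> R "AllK Q1 Q2" rule: subA.induct)
    case (SA_Trans_TVar \<Gamma> i U)
    then have UT: "\<Gamma> \<turnstile>\<^sub>A U <: T" by simp
    have wf: "wf_env \<Gamma>" "wf_type \<Gamma> T" using subA_wf[OF UT] by auto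
    have wfi: "wf_type \<Gamma> (TVar i)" using SA_Trans_TVar(1) by (rule wf_type.wf_TVar)
    show ?case
    proof (cases "T = Top")
      case True then show ?thesis using wf wfi by (simp add: subA.SA_Top)
    next
      case F1: False
      show ?thesis
      proof (cases "T = TVar i")
        case True then show ?thesis using wf wfi by (simp add: subA.SA_Refl_TVar)
      next
        case False then show ?thesis using F1 UT SA_Trans_TVar(1) subA.SA_Trans_TVar by blast
      qed
    qed
  next
    case (SA_AllK \<Gamma> R2)
    note h1 = SA_AllK.hyps(1)
    have wfR: "wf_env \<Gamma>" "wf_type \<Gamma> (AllK Q1 R2)" using subA_wf[OF subA.SA_AllK[OF h1]] by auto
    from SA_AllK.prems show ?case
    proof (cases rule: subA.cases)
      case SA_Top
      then show ?thesis using wfR by (simp add: subA.SA_Top)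
    next
      case (SA_AllK T2)
      note a = SA_AllK
      show ?thesis unfolding a(1)
        by (rule subA.SA_AllK[OF AllK.IH(2)[OF h1 a(2)]])
    next
      case (SA_AllKT T0 T1)
      note a = SA_AllKT
      show ?thesis unfolding a(1)
        by (rule subA.SA_AllKT[OF a(2) AllK.IH(2)[OF h1 a(3)]])
    qed
  qed
next
  case (AllT Q1 Q2)
  from AllT.prems show ?case
  proof (induction \<Gamma> R "AllT Q1 Q2" rule: subA.induct)
    case (SA_Trans_TVar \<Gamma> i U)
    then have UT: "\<Gamma> \<turnstile>\<^sub>A U <: T" by simp
    have wf: "wf_env \<Gamma>" "wf_type \<Gamma> T" using subA_wf[OF UT] by auto
    have wfi: "wf_type \<Gamma> (TVar i)" using SA_Trans_TVar(1) by (rule wf_type.wf_TVar)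
    show ?case
    proof (cases "T = Top")
      case True then show ?thesis using wf wfi by (simp add: subA.SA_Top)
    next
      case F1: False
      show ?thesis
      proof (cases "T = TVar i")
        case True then show ?thesis using wf wfi by (simp add: subA.SA_Refl_TVar)
      next
        case False then show ?thesis using F1 UT SA_Trans_TVar(1) subA.SA_Trans_TVar by blast
      qed
    qed
  next
    case (SA_AllKT \<Gamma> S0 S1)
    note h1 = SA_AllKT.hyps(1) and h3 = SA_AllKT.hyps(3)
    have wfR: "wf_env \<Gamma>" "wf_type \<Gamma> (AllK S0 S1)" "wf_type \<Gamma> S0"
      using subA_wf[OF subA.SA_AllKT[OF h1 h3]] subA_wf[OF h1] by auto
    from SA_AllKT.prems show ?case
    proof (cases rule: subA.cases)
      case SA_Top
      then show ?thesis using wfR by (simp add: subA.SA_Top)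
    next
      case (SA_AllT T0 T1)
      note a = SA_AllT
      have "[] @ TVarB S0 # \<Gamma> \<turnstile>\<^sub>A Q2 <: T1"
        by (rule narrow_Top[OF a(3) _ wfR(3)]) simp
      then have b: "TVarB S0 # \<Gamma> \<turnstile>\<^sub>A S1 <: T1" using AllT.IH(2)[OF h3] by simp
      show ?thesis unfolding a(1)
        by (rule subA.SA_AllKT[OF AllT.IH(1)[OF a(2) h1] b])
    qed
  next
    case (SA_AllT \<Gamma> S0 S1)
    note h1 = SA_AllT.hyps(1) and h3 = SA_AllT.hyps(3)
    have wfR: "wf_env \<Gamma>" "wf_type \<Gamma> (AllT S0 S1)"
      using subA_wf[OF subA.SA_AllT[OF h1 h3]] by auto
    from SA_AllT.prems show ?case
    proof (cases rule: subA.cases)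
      case SA_Top
      then show ?thesis using wfR by (simp add: subA.SA_Top)
    next
      case (SA_AllT T0 T1)
      note a = SA_AllT
      show ?thesis unfolding a(1)
        by (rule subA.SA_AllT[OF AllT.IH(1)[OF a(2) h1] AllT.IH(2)[OF h3 a(3)]])
    qed
  qed
qed

theorem lemma6p1:
  assumes "\<Theta> \<turnstile>\<^sub>A R <: S" and "\<Theta> \<turnstile>\<^sub>A S <: T"
  shows "\<Theta> \<turnstile>\<^sub>A R <: T"
  by (rule trans_aux[OF assms])

end
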